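(* Let $\mathcal{C}$ be a nonempty $3$-divisible set of points of $\mathrm{PG}(v-1,3)$ with $v\ge2$, and let $n=|\mathcal{C}|$. Then $n=4$ or $n\ge8$. Moreover, for $n=4$ and for every $n\ge8$ there exists a nonempty $3$-divisible set of $n$ points in $\mathrm{PG}(v-1,3)$ for some $v\ge2$.
   Context: $\mathrm{PG}(v-1,3)$ is the set of $1$-dimensional subspaces (points) of $\mathbb{F}_3^v$; hyperplanes are the $(v-1)$-dimensional subspaces. A set $\mathcal{C}$ of points is $\Delta$-divisible if there is an integer $u$ with $|\mathcal{C}\cap H|\equiv u\pmod{\Delta}$ for every hyperplane $H$, where $\mathcal{C}\cap H$ is the set of points of $\mathcal{C}$ contained in $H$. *)

theory Defs
  imports Main
begin

definition F3vecs :: "nat \<Rightarrow> (nat \<Rightarrow> int) set" where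
  "F3vecs v = {x. (\<forall>i. x i \<in> {0,1,2}) \<and> (\<forall>i\<ge>v. x i = 0)}"

definition F3smult :: "int \<Rightarrow> (nat \<Rightarrow> int) \<Rightarrow> (nat \<Rightarrow> int)" where
  "F3smult c x = (\<lambda>i. (c * x i) mod 3)"

definition F3span1 :: "(nat \<Rightarrow> int) \<Rightarrow> (nat \<Rightarrow> int) set" where
  "F3span1 x = {F3smult c x | c. c \<in> {0,1,2}}"

definition PG_points :: "nat \<Rightarrow> (nat \<Rightarrow> int) set set" where
  "PG_points v = {F3span1 x | x. x \<in> F3vecs v \<and> x \<noteq> (\<lambda>_. 0)}"

definition PG_hyperplanes :: "nat \<Rightarrow> (nat \<Rightarrow> int) set set" where
  "PG_hyperplanes v = {{x \<in> F3vecs v. (\<Sum>i<v. a i * x i) mod 3 = 0} | a.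
      a \<in> F3vecs v \<and> a \<noteq> (\<lambda>_. 0)}"

definition divisible_pts :: "nat \<Rightarrow> nat \<Rightarrow> (nat \<Rightarrow> int) set set \<Rightarrow> bool" where
  "divisible_pts \<Delta> v C \<longleftrightarrow> (\<exists>u::int. \<forall>H \<in> PG_hyperplanes v.
      int (card {P \<in> C. P \<subseteq> H}) mod int \<Delta> = u mod int \<Delta>)"

end

theory Submission
  imports Defs "HOL-Library.FuncSet"
begin

definition dot :: "nat \<Rightarrow> (nat \<Rightarrow> int) \<Rightarrow> (nat \<Rightarrow> int) \<Rightarrow> int" where
  "dot v a x = (\<Sum>i<v. a i * x i)"

definition ind :: "nat \<Rightarrow> (nat \<Rightarrow> int) \<Rightarrow> (nat \<Rightarrow> int) \<Rightarrow> int" where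
  "ind v a x = (if dot v a x mod 3 = 0 then 0 else 1)"

lemma F3vecs_finite: "finite (F3vecs v)"
proof -
  have "F3vecs v \<subseteq> (\<lambda>g i. if i < v then g i else 0) ` (PiE {..<v} (\<lambda>_. {0,1,2::int}))"
  proof
    fix x assume x: "x \<in> F3vecs v"
    have "x = (\<lambda>i. if i < v then restrict x {..<v} i else 0)"
      using x by (auto simp: F3vecs_def)
    moreover have "restrict x {..<v} \<in> PiE {..<v} (\<lambda>_. {0,1,2::int})"
      using x by (auto simp: F3vecs_def)
    ultimately show "x \<in> (\<lambda>g i. if i < v then g i else 0) ` (PiE {..<v} (\<lambda>_. {0,1,2::int}))"
      by blast
  qed
  moreover have "finite (PiE {..<v} (\<lambda>_. {0,1,2::int}))" by (intro finite_PiE) auto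
  ultimately show ?thesis by (meson finite_imageI finite_subset)
qed

lemma zero_F3vecs: "(\<lambda>_. 0) \<in> F3vecs v" by (simp add: F3vecs_def)

lemma F3vecs_pos: "card (F3vecs v) > 0"
  using F3vecs_finite zero_F3vecs by (metis card_gt_0_iff empty_iff)

lemma dot_mod_lin:
  assumes "\<And>i. z i mod 3 = (c * x i + d * y i) mod 3"
  shows "dot v a z mod 3 = (c * dot v a x + d * dot v a y) mod 3"
proof -
  have "dot v a z mod 3 = (\<Sum>i<v. (a i * z i) mod 3) mod 3"
    unfolding dot_def by (rule mod_sum_eq[symmetric])
  also have "(\<Sum>i<v. (a i * z i) mod 3) = (\<Sum>i<v. (a i * (c * x i + d * y i)) mod 3)"
  proof (rule sum.cong[OF refl])
    fix i
    have "(a i * z i) mod 3 = (a i * (z i mod 3)) mod 3" by (rule mod_mult_right_eq[symmetric])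
    also have "\<dots> = (a i * ((c * x i + d * y i) mod 3)) mod 3" by (simp only: assms)
    also have "\<dots> = (a i * (c * x i + d * y i)) mod 3" by (rule mod_mult_right_eq)
    finally show "(a i * z i) mod 3 = (a i * (c * x i + d * y i)) mod 3" .
  qed
  also have "(\<Sum>i<v. (a i * (c * x i + d * y i)) mod 3) mod 3 = (\<Sum>i<v. a i * (c * x i + d * y i)) mod 3"
    by (rule mod_sum_eq)
  also have "(\<Sum>i<v. a i * (c * x i + d * y i)) = (\<Sum>i<v. c * (a i * x i) + d * (a i * y i))"
    by (rule sum.cong) (simp_all add: algebra_simps)
  also have "\<dots> = c * dot v a x + d * dot v a y"
    by (simp add: sum.distrib sum_distrib_left dot_def)
  finally show ?thesis .
qed

lemma dot_upd:
  assumes "j < v"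
  shows "dot v (a(j := t)) x = dot v a x + (t - a j) * x j"
proof -
  have "dot v (a(j := t)) x = (\<Sum>i<v. a i * x i + (if i = j then (t - a j) * x j else 0))"
    unfolding dot_def by (rule sum.cong) (auto simp: algebra_simps)
  also have "\<dots> = (\<Sum>i<v. a i * x i) + (\<Sum>i<v. (if i = j then (t - a j) * x j else 0))"
    by (rule sum.distrib)
  also have "(\<Sum>i<v. (if i = j then (t - a j) * x j else 0)) = (t - a j) * x j"
    using assms by (simp add: sum.delta)
  finally show ?thesis by (simp add: dot_def)
qed

lemma F3vecs_nz:
  assumes "x \<in> F3vecs v" "x \<noteq> (\<lambda>_. 0)" shows "\<exists>j<v. x j \<in> {1,2}"
proof -
  obtain j where j: "x j \<noteq> 0" using assms(2) by auto
  have "j < v" using assms(1) j unfolding F3vecs_def by (rule_tac ccontr) auto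
  moreover have "x j \<in> {0,1,2}" using assms(1) unfolding F3vecs_def by blast
  ultimately show ?thesis using j by blast
qed

lemma count1:
  assumes x: "x \<in> F3vecs v" "x \<noteq> (\<lambda>_. 0)"
  shows "3 * (\<Sum>a\<in>F3vecs v. ind v a x) = 2 * int (card (F3vecs v))"
proof -
  define V where "V = F3vecs v"
  obtain j where j: "j < v" "x j \<in> {1,2}" using F3vecs_nz[OF x] by blast
  define S where "S r = {a\<in>V. dot v a x mod 3 = r}" for r
  define \<phi> where "\<phi> a = a(j := (a j + 1) mod 3)" for a :: "nat \<Rightarrow> int"
  have fin: "finite V" by (simp add: V_def F3vecs_finite)
  have phiV: "\<phi> a \<in> V" if "a \<in> V" for a
    using that j unfolding V_def F3vecs_def \<phi>_def by auto
  have inj: "inj_on \<phi> V"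
  proof
    fix a b assume ab: "a \<in> V" "b \<in> V" "\<phi> a = \<phi> b"
    show "a = b"
    proof
      fix i show "a i = b i"
      proof (cases "i = j")
        case True
        have "(a j + 1) mod 3 = (b j + 1) mod 3" using ab(3) unfolding \<phi>_def by (metis fun_upd_same)
        moreover have "a j \<in> {0,1,2}" "b j \<in> {0,1,2}" using ab unfolding V_def F3vecs_def by auto
        ultimately show ?thesis using True by auto
      next
        case False
        then show ?thesis using ab(3) unfolding \<phi>_def by (metis fun_upd_other)
      qed
    qed
  qed
  have shift: "dot v (\<phi> a) x mod 3 = (dot v a x + x j) mod 3" if "a \<in> V" for a
  proof -
    have aj: "a j \<in> {0,1,2}" using that unfolding V_def F3vecs_def by auto
    have "dot v (\<phi> a) x = dot v a x + ((a j + 1) mod 3 - a j) * x j"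
      unfolding \<phi>_def using dot_upd[OF j(1)] by simp
    moreover have "((a j + 1) mod 3 - a j) * x j = x j \<or> ((a j + 1) mod 3 - a j) * x j = x j - 3 * x j"
      using aj by auto
    ultimately show ?thesis by (elim disjE) (simp, presburger)
  qed
  have le: "card (S r) \<le> card (S ((r + x j) mod 3))" for r
  proof -
    have "\<phi> ` S r \<subseteq> S ((r + x j) mod 3)"
      using shift phiV unfolding S_def by (auto simp: mod_add_left_eq)
    moreover have "inj_on \<phi> (S r)" using inj unfolding S_def by (rule inj_on_subset) auto
    moreover have "finite (S ((r + x j) mod 3))" using fin unfolding S_def by simp
    ultimately show ?thesis by (meson card_inj_on_le)
  qed
  have eq: "card (S 0) = card (S 1) \<and> card (S 1) = card (S 2)"
  proof (cases "x j = 1")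
    case True
    have "card (S 0) \<le> card (S 1)" "card (S 1) \<le> card (S 2)" "card (S 2) \<le> card (S 0)"
      using le[of 0] le[of 1] le[of 2] True by simp_all
    then show ?thesis by linarith
  next
    case False
    then have x2: "x j = 2" using j(2) by simp
    have "card (S 0) \<le> card (S 2)" "card (S 2) \<le> card (S 1)" "card (S 1) \<le> card (S 0)"
      using le[of 0] le[of 1] le[of 2] x2 by simp_all
    then show ?thesis by linarith
  qed
  have part: "V = S 0 \<union> S 1 \<union> S 2" unfolding S_def by auto
  have "card V = card (S 0) + card (S 1) + card (S 2)"
    unfolding part using fin unfolding S_def
    by (subst card_Un_disjoint, auto)+
  moreover have "(\<Sum>a\<in>V. ind v a x) = int (card (S 1)) + int (card (S 2))"
  proof -
    have "(\<Sum>a\<in>V. ind v a x) = (\<Sum>a\<in>V. of_bool (dot v a x mod 3 \<noteq> 0))"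
      unfolding ind_def by (rule sum.cong) auto
    also have "\<dots> = int (card (V \<inter> {a. dot v a x mod 3 \<noteq> 0}))" using fin by simp
    also have "V \<inter> {a. dot v a x mod 3 \<noteq> 0} = S 1 \<union> S 2" unfolding S_def by auto
    also have "card (S 1 \<union> S 2) = card (S 1) + card (S 2)"
      using fin unfolding S_def by (subst card_Un_disjoint) auto
    finally show ?thesis by simp
  qed
  ultimately show ?thesis using eq unfolding V_def by simp
qed

definition Hs :: "nat \<Rightarrow> (nat \<Rightarrow> int) \<Rightarrow> (nat \<Rightarrow> int) set" where
  "Hs v a = {x \<in> F3vecs v. dot v a x mod 3 = 0}"

lemma mod3_cases: "(t::int) mod 3 \<in> {0,1,2}"
proof -
  have "0 \<le> t mod 3" "t mod 3 < 3" by simp_all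
  then show ?thesis by auto
qed

lemma ind_ident0:
  fixes a b :: int
  assumes "a \<in> {0,1,2}" "b \<in> {0,1,2}"
  shows "3 * ((if a = 0 then 0 else 1) * (if b = 0 then 0 else 1)) =
    2 * (if a = 0 then 0 else 1) + 2 * (if b = 0 then 0 else 1)
    - (if (a + b) mod 3 = 0 then 0 else (1::int)) - (if (a - b) mod 3 = 0 then 0 else 1)"
  using assms by auto
lemma negc:
  fixes a b c :: int
  assumes "a \<in> {0,1,2}" "b \<in> {0,1,2}" "c \<in> {0,1,2}" "(a + b) mod 3 = 0"
  shows "(c * a) mod 3 = ((2 * c) mod 3 * b) mod 3"
  using assms by auto
lemma diffz:
  fixes a b :: int
  assumes "a \<in> {0,1,2}" "b \<in> {0,1,2}" "(a - b) mod 3 = 0"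
  shows "a = b"
  using assms by auto

lemma ind_ident:
  fixes p q :: int
  shows "3 * ((if p mod 3 = 0 then 0 else 1) * (if q mod 3 = 0 then 0 else 1)) =
    2 * (if p mod 3 = 0 then 0 else 1) + 2 * (if q mod 3 = 0 then 0 else 1)
    - (if (p + q) mod 3 = 0 then 0 else (1::int)) - (if (p - q) mod 3 = 0 then 0 else 1)"
proof -
  have e1: "(p + q) mod 3 = (p mod 3 + q mod 3) mod 3" by (simp add: mod_add_eq)
  have e2: "(p - q) mod 3 = (p mod 3 - q mod 3) mod 3" by (simp add: mod_diff_eq)
  show ?thesis by (subst e1, subst e2, rule ind_ident0[OF mod3_cases mod3_cases])
qed

lemma vec_mod_in: "x \<in> F3vecs v \<Longrightarrow> y \<in> F3vecs v \<Longrightarrow> (\<lambda>i. (c * x i + d * y i) mod 3) \<in> F3vecs v"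
  unfolding F3vecs_def using mod3_cases by auto

lemma count2:
  assumes x: "x \<in> F3vecs v" "x \<noteq> (\<lambda>_. 0)" and y: "y \<in> F3vecs v" "y \<noteq> (\<lambda>_. 0)"
    and zp: "(\<lambda>i. (1 * x i + 1 * y i) mod 3) \<noteq> (\<lambda>_. 0)"
    and zm: "(\<lambda>i. (1 * x i + (-1) * y i) mod 3) \<noteq> (\<lambda>_. 0)"
  shows "9 * (\<Sum>a\<in>F3vecs v. ind v a x * ind v a y) = 4 * int (card (F3vecs v))"
proof -
  define V where "V = F3vecs v"
  define p where "p = (\<lambda>i. (1 * x i + 1 * y i) mod 3)"
  define m where "m = (\<lambda>i. (1 * x i + (-1) * y i) mod 3)"
  have pV: "p \<in> F3vecs v" unfolding p_def by (rule vec_mod_in[OF x(1) y(1)])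
  have mV: "m \<in> F3vecs v" unfolding m_def by (rule vec_mod_in[OF x(1) y(1)])
  have pt: "3 * (ind v a x * ind v a y) = 2 * ind v a x + 2 * ind v a y - ind v a p - ind v a m" for a
  proof -
    have "dot v a p mod 3 = (1 * dot v a x + 1 * dot v a y) mod 3"
      by (rule dot_mod_lin) (simp add: p_def)
    moreover have "dot v a m mod 3 = (1 * dot v a x + (-1) * dot v a y) mod 3"
      by (rule dot_mod_lin) (simp add: m_def)
    ultimately show ?thesis unfolding ind_def using ind_ident[of "dot v a x" "dot v a y"] by simp
  qed
  have "3 * (\<Sum>a\<in>V. ind v a x * ind v a y) = (\<Sum>a\<in>V. 2 * ind v a x + 2 * ind v a y - ind v a p - ind v a m)"
    by (simp add: sum_distrib_left pt)
  also have "\<dots> = 2 * (\<Sum>a\<in>V. ind v a x) + 2 * (\<Sum>a\<in>V. ind v a y) - (\<Sum>a\<in>V. ind v a p) - (\<Sum>a\<in>V. ind v a m)"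
    by (simp add: sum.distrib sum_subtractf sum_distrib_left)
  finally have "3 * (\<Sum>a\<in>V. ind v a x * ind v a y) = 2 * (\<Sum>a\<in>V. ind v a x) + 2 * (\<Sum>a\<in>V. ind v a y) - (\<Sum>a\<in>V. ind v a p) - (\<Sum>a\<in>V. ind v a m)" .
  moreover have "3 * (\<Sum>a\<in>V. ind v a x) = 2 * int (card V)" using count1[OF x] V_def by simp
  moreover have "3 * (\<Sum>a\<in>V. ind v a y) = 2 * int (card V)" using count1[OF y] V_def by simp
  moreover have "3 * (\<Sum>a\<in>V. ind v a p) = 2 * int (card V)" using count1[OF pV] zp V_def p_def by simp
  moreover have "3 * (\<Sum>a\<in>V. ind v a m) = 2 * int (card V)" using count1[OF mV] zm V_def m_def by simp
  ultimately show ?thesis unfolding V_def by linarith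
qed

lemma span_mem: "x \<in> F3vecs v \<Longrightarrow> x \<in> F3span1 x"
proof -
  assume x: "x \<in> F3vecs v"
  have "F3smult 1 x = x"
  proof
    fix i have "x i \<in> {0,1,2}" using x unfolding F3vecs_def by auto
    then show "F3smult 1 x i = x i" unfolding F3smult_def by auto
  qed
  then show ?thesis unfolding F3span1_def by force
qed

lemma span_sub_H:
  assumes x: "x \<in> F3vecs v"
  shows "F3span1 x \<subseteq> Hs v a \<longleftrightarrow> dot v a x mod 3 = 0"
proof
  assume "F3span1 x \<subseteq> Hs v a"
  then show "dot v a x mod 3 = 0" using span_mem[OF x] unfolding Hs_def by auto
next
  assume d: "dot v a x mod 3 = 0"
  show "F3span1 x \<subseteq> Hs v a"
  proof
    fix y assume "y \<in> F3span1 x"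
    then obtain c where y: "y = F3smult c x" unfolding F3span1_def by auto
    have yV: "y \<in> F3vecs v" unfolding y F3smult_def using x mod3_cases unfolding F3vecs_def by auto
    have "dot v a y mod 3 = (c * dot v a x + 0 * dot v a x) mod 3"
      by (rule dot_mod_lin) (simp add: y F3smult_def)
    also have "\<dots> = (c * (dot v a x mod 3)) mod 3" by (simp add: mod_mult_right_eq)
    finally show "y \<in> Hs v a" using d yV unfolding Hs_def by simp
  qed
qed

lemma span_neg_sub:
  assumes x: "x \<in> F3vecs v" and y: "y \<in> F3vecs v" and s: "\<And>i. (x i + y i) mod 3 = 0"
  shows "F3span1 x \<subseteq> F3span1 y"
proof
  fix z assume "z \<in> F3span1 x"
  then obtain c where c: "c \<in> {0,1,2}" "z = F3smult c x" unfolding F3span1_def by auto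
  have eqc: "F3smult c x = F3smult ((2 * c) mod 3) y"
  proof
    fix i
    have xi: "x i \<in> {0,1,2}" and yi: "y i \<in> {0,1,2}" using x y unfolding F3vecs_def by auto
    show "F3smult c x i = F3smult ((2 * c) mod 3) y i"
      unfolding F3smult_def by (rule negc[OF xi yi c(1) s[of i]])
  qed
  have m3: "(2 * c) mod 3 \<in> {0,1,2}" by (rule mod3_cases)
  have "z = F3smult ((2 * c) mod 3) y" using c(2) eqc by simp
  then show "z \<in> F3span1 y" unfolding F3span1_def using m3 by (intro CollectI exI[of _ "(2 * c) mod 3"] conjI)
qed

lemma diff_zero_eq:
  assumes x: "x \<in> F3vecs v" and y: "y \<in> F3vecs v" and s: "\<And>i. (x i - y i) mod 3 = 0"
  shows "x = y"
proof
  fix i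
  have "x i \<in> {0,1,2}" "y i \<in> {0,1,2}" using x y unfolding F3vecs_def by auto
  then show "x i = y i" using s[of i] by (rule diffz)
qed

lemma Hs_hyp: "a \<in> F3vecs v \<Longrightarrow> a \<noteq> (\<lambda>_. 0) \<Longrightarrow> Hs v a \<in> PG_hyperplanes v"
  unfolding Hs_def PG_hyperplanes_def dot_def by blast

lemma PG_finite: "finite (PG_points v)"
proof -
  have "PG_points v \<subseteq> F3span1 ` F3vecs v" unfolding PG_points_def by auto
  then show ?thesis using F3vecs_finite finite_subset by blast
qed

lemma mult3_cases:
  fixes t :: int
  assumes "t mod 3 = 0" "0 \<le> t"
  shows "t = 0 \<or> t = 3 \<or> t = 6 \<or> 9 \<le> t"
  using assms by presburger

lemma nonexist:
  assumes v: "v \<ge> 2" and CP: "C \<subseteq> PG_points v" and Cne: "C \<noteq> {}"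
    and dv: "divisible_pts 3 v C" and nn: "\<not> (card C = 4 \<or> card C \<ge> 8)"
  shows False
proof -
  define V where "V = F3vecs v"
  define T where "T = int (card V)"
  define n where "n = card C"
  have finV: "finite V" unfolding V_def by (rule F3vecs_finite)
  have Tpos: "T > 0" unfolding T_def V_def using F3vecs_pos by simp
  have finC: "finite C" using CP PG_finite finite_subset by blast
  have n1: "n \<ge> 1" using finC Cne unfolding n_def by (simp add: Suc_le_eq card_gt_0_iff)
  have ncase: "n \<in> {1,2,3,5,6,7}" using nn n1 unfolding n_def by auto
  obtain u :: int where u: "\<And>H. H \<in> PG_hyperplanes v \<Longrightarrow> int (card {P \<in> C. P \<subseteq> H}) mod 3 = u mod 3"
    using dv unfolding divisible_pts_def by auto
  define r where "r P = (SOME x. x \<in> V \<and> x \<noteq> (\<lambda>_. 0) \<and> P = F3span1 x)" for P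
  have rP: "r P \<in> V \<and> r P \<noteq> (\<lambda>_. 0) \<and> P = F3span1 (r P)" if "P \<in> C" for P
  proof -
    have "\<exists>x. x \<in> V \<and> x \<noteq> (\<lambda>_. 0) \<and> P = F3span1 x"
      using that CP unfolding PG_points_def V_def by auto
    then show ?thesis unfolding r_def by (rule someI_ex)
  qed
  define w where "w a = (\<Sum>P\<in>C. ind v a (r P))" for a
  have w_card: "w a = int (card {P \<in> C. \<not> P \<subseteq> Hs v a})" for a
  proof -
    have "w a = (\<Sum>P\<in>C. of_bool (\<not> P \<subseteq> Hs v a))"
      unfolding w_def
    proof (rule sum.cong[OF refl])
      fix P assume P: "P \<in> C"
      have "P \<subseteq> Hs v a \<longleftrightarrow> dot v a (r P) mod 3 = 0"
        using rP[OF P] span_sub_H[of "r P" v a] unfolding V_def by metis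
      then show "ind v a (r P) = of_bool (\<not> P \<subseteq> Hs v a)" unfolding ind_def by simp
    qed
    also have "\<dots> = int (card (C \<inter> {P. \<not> P \<subseteq> Hs v a}))" using finC by simp
    finally show ?thesis by (simp add: Int_def conj_commute)
  qed
  have w_bounds: "0 \<le> w a \<and> w a \<le> int n" for a
  proof -
    have "card {P \<in> C. \<not> P \<subseteq> Hs v a} \<le> card C" using finC by (intro card_mono) auto
    then show ?thesis unfolding w_card n_def by simp
  qed
  have w_mod: "w a mod 3 = (int n - u) mod 3" if a: "a \<in> V" "a \<noteq> (\<lambda>_. 0)" for a
  proof -
    define H where "H = Hs v a"
    have hyp: "H \<in> PG_hyperplanes v" unfolding H_def using Hs_hyp a unfolding V_def by blast
    have sub: "{P \<in> C. P \<subseteq> H} \<subseteq> C" by auto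
    have fs: "finite {P \<in> C. P \<subseteq> H}" using finC by simp
    have "{P \<in> C. \<not> P \<subseteq> H} = C - {P \<in> C. P \<subseteq> H}" by auto
    then have "card {P \<in> C. \<not> P \<subseteq> H} = card C - card {P \<in> C. P \<subseteq> H}"
      using card_Diff_subset[OF fs sub] by simp
    moreover have "card {P \<in> C. P \<subseteq> H} \<le> card C" using finC sub by (rule card_mono)
    ultimately have wk: "w a = int n - int (card {P \<in> C. P \<subseteq> H})"
      unfolding w_card n_def H_def by (simp add: of_nat_diff)
    have "w a mod 3 = (int n - int (card {P \<in> C. P \<subseteq> H}) mod 3) mod 3"
      unfolding wk by (rule mod_diff_right_eq[symmetric])
    also have "\<dots> = (int n - u mod 3) mod 3" by (simp only: u[OF hyp])
    also have "\<dots> = (int n - u) mod 3" by (rule mod_diff_right_eq)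
    finally show ?thesis .
  qed
  have w0: "w (\<lambda>_. 0) = 0" unfolding w_def ind_def dot_def by simp
  have S1: "3 * (\<Sum>a\<in>V. w a) = 2 * int n * T"
  proof -
    have "(\<Sum>a\<in>V. w a) = (\<Sum>P\<in>C. \<Sum>a\<in>V. ind v a (r P))" unfolding w_def by (rule sum.swap)
    then have "3 * (\<Sum>a\<in>V. w a) = (\<Sum>P\<in>C. 3 * (\<Sum>a\<in>V. ind v a (r P)))" by (simp add: sum_distrib_left)
    also have "\<dots> = (\<Sum>P\<in>C. 2 * T)"
      by (rule sum.cong[OF refl]) (use rP count1 in \<open>auto simp: V_def T_def\<close>)
    finally show ?thesis unfolding n_def by simp
  qed
  have pairQ: "9 * (\<Sum>a\<in>V. ind v a (r P) * ind v a (r Q)) = 4 * T"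
    if P: "P \<in> C" and Q: "Q \<in> C" and PQ: "P \<noteq> Q" for P Q
  proof -
    have x: "r P \<in> F3vecs v" "r P \<noteq> (\<lambda>_. 0)" "P = F3span1 (r P)" using rP[OF P] V_def by auto
    have y: "r Q \<in> F3vecs v" "r Q \<noteq> (\<lambda>_. 0)" "Q = F3span1 (r Q)" using rP[OF Q] V_def by auto
    have zp: "(\<lambda>i. (1 * r P i + 1 * r Q i) mod 3) \<noteq> (\<lambda>_. 0)"
    proof
      assume "(\<lambda>i. (1 * r P i + 1 * r Q i) mod 3) = (\<lambda>_. 0)"
      then have s: "\<And>i. (r P i + r Q i) mod 3 = 0" by (metis mult_1)
      have s': "\<And>i. (r Q i + r P i) mod 3 = 0" using s by (simp add: add.commute)
      have "P = Q" using span_neg_sub[OF x(1) y(1) s] span_neg_sub[OF y(1) x(1) s'] x(3) y(3) by blast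
      then show False using PQ by simp
    qed
    have zm: "(\<lambda>i. (1 * r P i + (-1) * r Q i) mod 3) \<noteq> (\<lambda>_. 0)"
    proof
      assume "(\<lambda>i. (1 * r P i + (-1) * r Q i) mod 3) = (\<lambda>_. 0)"
      then have s: "\<And>i. (r P i - r Q i) mod 3 = 0" by (metis mult_1 mult_minus1 diff_conv_add_uminus)
      have "P = Q" using diff_zero_eq[OF x(1) y(1) s] x(3) y(3) by simp
      then show False using PQ by simp
    qed
    show ?thesis using count2[OF x(1,2) y(1,2) zp zm] unfolding V_def T_def by simp
  qed
  have rowP: "9 * (\<Sum>Q\<in>C. \<Sum>a\<in>V. ind v a (r P) * ind v a (r Q)) = 6 * T + (int n - 1) * 4 * T"
    if P: "P \<in> C" for P
  proof -
    have "(\<Sum>Q\<in>C. \<Sum>a\<in>V. ind v a (r P) * ind v a (r Q)) =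
      (\<Sum>a\<in>V. ind v a (r P) * ind v a (r P)) + (\<Sum>Q\<in>C - {P}. \<Sum>a\<in>V. ind v a (r P) * ind v a (r Q))"
      using finC P by (simp add: sum.remove)
    moreover have "(\<Sum>a\<in>V. ind v a (r P) * ind v a (r P)) = (\<Sum>a\<in>V. ind v a (r P))"
      by (rule sum.cong) (auto simp: ind_def)
    moreover have "3 * (\<Sum>a\<in>V. ind v a (r P)) = 2 * T" using rP[OF P] count1 V_def T_def by auto
    moreover have "9 * (\<Sum>Q\<in>C - {P}. \<Sum>a\<in>V. ind v a (r P) * ind v a (r Q)) = (\<Sum>Q\<in>C - {P}. 4 * T)"
    proof -
      have "9 * (\<Sum>Q\<in>C - {P}. \<Sum>a\<in>V. ind v a (r P) * ind v a (r Q)) =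
        (\<Sum>Q\<in>C - {P}. 9 * (\<Sum>a\<in>V. ind v a (r P) * ind v a (r Q)))" by (rule sum_distrib_left)
      also have "\<dots> = (\<Sum>Q\<in>C - {P}. 4 * T)"
      proof (rule sum.cong[OF refl])
        fix Q assume "Q \<in> C - {P}"
        then show "9 * (\<Sum>a\<in>V. ind v a (r P) * ind v a (r Q)) = 4 * T" using pairQ[OF P] by auto
      qed
      finally show ?thesis .
    qed
    moreover have "card (C - {P}) = n - 1" using finC P unfolding n_def by simp
    ultimately show ?thesis using n1 by (simp add: of_nat_diff algebra_simps)
  qed
  have S2: "9 * (\<Sum>a\<in>V. w a * w a) = int n * (6 * T + (int n - 1) * 4 * T)"
  proof -
    have "(\<Sum>a\<in>V. w a * w a) = (\<Sum>a\<in>V. \<Sum>P\<in>C. \<Sum>Q\<in>C. ind v a (r P) * ind v a (r Q))"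
      unfolding w_def by (simp add: sum_product)
    also have "\<dots> = (\<Sum>P\<in>C. \<Sum>a\<in>V. \<Sum>Q\<in>C. ind v a (r P) * ind v a (r Q))" by (rule sum.swap)
    also have "\<dots> = (\<Sum>P\<in>C. \<Sum>Q\<in>C. \<Sum>a\<in>V. ind v a (r P) * ind v a (r Q))"
      by (rule sum.cong[OF refl]) (rule sum.swap)
    finally have "9 * (\<Sum>a\<in>V. w a * w a) = (\<Sum>P\<in>C. 9 * (\<Sum>Q\<in>C. \<Sum>a\<in>V. ind v a (r P) * ind v a (r Q)))"
      by (simp add: sum_distrib_left)
    also have "\<dots> = (\<Sum>P\<in>C. 6 * T + (int n - 1) * 4 * T)"
      by (rule sum.cong[OF refl]) (use rowP in auto)
    finally show ?thesis unfolding n_def by simp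
  qed
  obtain m where Tm: "T = 9 * m"
  proof -
    define e0 where "e0 = (\<lambda>i::nat. if i = 0 then 1 else (0::int))"
    define e1 where "e1 = (\<lambda>i::nat. if i = 1 then 1 else (0::int))"
    have e0V: "e0 \<in> F3vecs v" using v unfolding e0_def F3vecs_def by auto
    have e1V: "e1 \<in> F3vecs v" using v unfolding e1_def F3vecs_def by auto
    have e0n: "e0 \<noteq> (\<lambda>_. 0)" unfolding e0_def by (metis one_neq_zero)
    have e1n: "e1 \<noteq> (\<lambda>_. 0)" unfolding e1_def by (metis one_neq_zero)
    have zp: "(\<lambda>i. (1 * e0 i + 1 * e1 i) mod 3) \<noteq> (\<lambda>_. 0)"
    proof
      assume "(\<lambda>i. (1 * e0 i + 1 * e1 i) mod 3) = (\<lambda>_. 0)"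
      then have "(1 * e0 0 + 1 * e1 0) mod 3 = 0" by metis
      then show False unfolding e0_def e1_def by simp
    qed
    have zm: "(\<lambda>i. (1 * e0 i + (-1) * e1 i) mod 3) \<noteq> (\<lambda>_. 0)"
    proof
      assume "(\<lambda>i. (1 * e0 i + (-1) * e1 i) mod 3) = (\<lambda>_. 0)"
      then have "(1 * e0 0 + (-1) * e1 0) mod 3 = 0" by metis
      then show False unfolding e0_def e1_def by simp
    qed
    have "9 * (\<Sum>a\<in>V. ind v a e0 * ind v a e1) = 4 * T"
      using count2[OF e0V e0n e1V e1n zp zm] unfolding V_def T_def by simp
    then have "T mod 9 = 0" by presburger
    then show ?thesis using that by (metis mult.commute div_mult_mod_eq add_0_right)
  qed
  have sum0: "(\<Sum>a\<in>V. w a) mod 3 = 0"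
  proof -
    have "3 * (\<Sum>a\<in>V. w a) = 3 * (6 * int n * m)" using S1 Tm by simp
    then have "(\<Sum>a\<in>V. w a) = 3 * (2 * int n * m)" by simp
    then show ?thesis by simp
  qed
  have z0V: "(\<lambda>_. 0) \<in> V" unfolding V_def by (rule zero_F3vecs)
  have "(\<Sum>a\<in>V. w a) = w (\<lambda>_. 0) + (\<Sum>a\<in>V - {(\<lambda>_. 0)}. w a)"
    using finV z0V by (simp add: sum.remove)
  then have "(\<Sum>a\<in>V - {(\<lambda>_. 0)}. w a) mod 3 = 0" using w0 sum0 by simp
  then have "(\<Sum>a\<in>V - {(\<lambda>_. 0)}. w a mod 3) mod 3 = 0" by (simp add: mod_sum_eq)
  moreover have "(\<Sum>a\<in>V - {(\<lambda>_. 0)}. w a mod 3) = (\<Sum>a\<in>V - {(\<lambda>_. 0)}. (int n - u) mod 3)"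
    by (rule sum.cong[OF refl]) (use w_mod in auto)
  moreover have "card (V - {(\<lambda>_. 0)}) = card V - 1" using finV z0V by simp
  moreover have "card V \<ge> 1" using finV z0V by (metis One_nat_def Suc_leI card_gt_0_iff empty_iff)
  ultimately have "((T - 1) * ((int n - u) mod 3)) mod 3 = 0" unfolding T_def by (simp add: of_nat_diff)
  moreover have "(int n - u) mod 3 \<in> {0,1,2}" by (rule mod3_cases)
  ultimately have c0: "(int n - u) mod 3 = 0" using Tm by auto presburger+
  have wm: "w a mod 3 = 0" if "a \<in> V" for a
    using that w_mod c0 w0 by (cases "a = (\<lambda>_. 0)") auto
  define A where "A = (\<Sum>a\<in>V. w a)"
  define B where "B = (\<Sum>a\<in>V. w a * w a)"
  have S1': "3 * A = 2 * int n * T" using S1 A_def by simp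
  have S2': "9 * B = int n * (6 * T + (int n - 1) * 4 * T)" using S2 B_def by simp
  have ws: "w a = 0 \<or> w a = 3 \<or> w a = 6 \<or> w a \<ge> 9" if "a \<in> V" for a
    using mult3_cases[OF wm[OF that]] w_bounds[of a] by blast
  show False
  proof -
    consider "n \<in> {1,2,3}" | "n = 5" | "n \<in> {6,7}" using ncase by auto
    then show False
    proof cases
      case 1
      have "(\<Sum>a\<in>V. w a * w a - 3 * w a) \<ge> 0"
      proof (rule sum_nonneg)
        fix a assume "a \<in> V"
        then have "w a = 0 \<or> w a \<ge> 3" using ws[of a] by linarith
        then show "w a * w a - 3 * w a \<ge> 0"
        proof
          assume "w a \<ge> 3" then have "w a * w a \<ge> 3 * w a" by (simp add: mult_right_mono)
          then show ?thesis by simp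
        qed simp
      qed
      then have "B - 3 * A \<ge> 0" unfolding A_def B_def by (simp add: sum_subtractf sum_distrib_left)
      then show False using 1 S1' S2' Tpos by auto
    next
      case 2
      have "(\<Sum>a\<in>V. w a * w a - 3 * w a) = 0"
      proof (rule sum.neutral, rule ballI)
        fix a assume a: "a \<in> V"
        then have "w a = 0 \<or> w a = 3" using ws w_bounds[of a] 2 by force
        then show "w a * w a - 3 * w a = 0" by auto
      qed
      then have "B - 3 * A = 0" unfolding A_def B_def by (simp add: sum_subtractf sum_distrib_left)
      then show False using 2 S1' S2' Tpos by auto
    next
      case 3
      have "(\<Sum>a\<in>V. w a * w a - 9 * w a + 18) \<ge> 0"
      proof (rule sum_nonneg)
        fix a assume a: "a \<in> V"
        then have "w a = 0 \<or> w a = 3 \<or> w a = 6" using ws w_bounds[of a] 3 by force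
        then show "w a * w a - 9 * w a + 18 \<ge> 0" by auto
      qed
      then have "B - 9 * A + 18 * T \<ge> 0" unfolding A_def B_def T_def
        by (simp add: sum_subtractf sum_distrib_left sum.distrib)
      then show False using 3 S1' S2' Tpos by auto
    qed
  qed
qed

definition vl :: "nat \<Rightarrow> int list \<Rightarrow> nat \<Rightarrow> int" where
  "vl s r = (\<lambda>i. if s \<le> i \<and> i - s < length r then r ! (i - s) else 0)"

definition blk :: "nat \<Rightarrow> int list list \<Rightarrow> (nat \<Rightarrow> int) set" where
  "blk s rows = vl s ` set rows"

definition lead1 :: "(nat \<Rightarrow> int) \<Rightarrow> bool" where
  "lead1 x = (\<exists>j. x j = 1 \<and> (\<forall>i<j. x i = 0))"

definition good :: "nat \<Rightarrow> (nat \<Rightarrow> int) set \<Rightarrow> bool" where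
  "good v R = (finite R \<and> R \<subseteq> F3vecs v \<and> (\<forall>x\<in>R. lead1 x) \<and> (\<forall>j l. (3::int) dvd (\<Sum>x\<in>R. x j * x l)))"

definition llead :: "int list \<Rightarrow> bool" where
  "llead r = (case dropWhile (\<lambda>x. x = 0) r of [] \<Rightarrow> False | h # _ \<Rightarrow> h = 1)"

definition gram_ok :: "nat \<Rightarrow> int list list \<Rightarrow> bool" where
  "gram_ok k rows = (\<forall>j\<in>set [0..<k]. \<forall>l\<in>set [0..<k]. sum_list (map (\<lambda>r. r ! j * r ! l) rows) mod 3 = 0)"

definition check_rows :: "nat \<Rightarrow> int list list \<Rightarrow> bool" where
  "check_rows k rows = (distinct rows \<and> (\<forall>r\<in>set rows. length r = k \<and> (\<forall>x\<in>set r. x \<in> {0,1,2}) \<and> llead r)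
     \<and> gram_ok k rows)"

definition line_rows :: "int list list" where
  "line_rows = [[1,0],[0,1],[1,1],[1,2]]"
definition aff_rows :: "int list list" where
  "aff_rows = [[0,0,1],[1,0,0],[1,1,2],[1,2,0],[1,0,2],[0,1,1],[0,1,0],[1,2,1],[1,1,1]]"
definition ov_rows :: "int list list" where
  "ov_rows = [[0,1,1,2],[1,1,2,2],[0,0,1,2],[1,1,1,1],[1,2,1,1],[0,0,1,0],[1,2,1,2],[1,0,1,2],[1,0,0,1],[0,1,1,1]]"
definition el_rows :: "int list list" where
  "el_rows = [[0,0,0,1,0],[0,1,1,0,1],[1,0,0,0,2],[1,0,0,2,1],[1,2,0,1,0],[1,2,0,1,2],[0,0,1,1,0],[0,1,1,1,0],[0,1,2,2,2],[1,0,2,1,0],[1,2,1,1,1]]"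

lemma chk_line: "check_rows 2 line_rows" unfolding line_rows_def by code_simp
lemma chk_aff: "check_rows 3 aff_rows" unfolding aff_rows_def by code_simp
lemma chk_ov: "check_rows 4 ov_rows" unfolding ov_rows_def by code_simp
lemma chk_el: "check_rows 5 el_rows" unfolding el_rows_def by code_simp

lemma len_rows: "length line_rows = 4" "length aff_rows = 9" "length ov_rows = 10" "length el_rows = 11"
  by (simp_all add: line_rows_def aff_rows_def ov_rows_def el_rows_def)

lemma llead_ex: "llead r \<Longrightarrow> \<exists>j<length r. r ! j = 1 \<and> (\<forall>i<j. r ! i = 0)"
proof (induction r)
  case Nil then show ?case by (simp add: llead_def)
next
  case (Cons a r)
  show ?case
  proof (cases "a = 0")
    case True
    then have "llead r" using Cons.prems by (simp add: llead_def)
    then obtain j where j: "j < length r" "r ! j = 1" "\<forall>i<j. r ! i = 0" using Cons.IH by blast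
    have "\<forall>i<Suc j. (a # r) ! i = 0"
    proof (intro allI impI)
      fix i assume "i < Suc j"
      then show "(a # r) ! i = 0" using True j(3) by (cases i) auto
    qed
    then show ?thesis using j by (intro exI[of _ "Suc j"]) auto
  next
    case False
    then have "a = 1" using Cons.prems by (simp add: llead_def)
    then show ?thesis by (intro exI[of _ 0]) auto
  qed
qed

lemma vl_zero_hi: "i \<ge> s + length r \<Longrightarrow> vl s r i = 0"
  unfolding vl_def by auto

lemma vl_in:
  assumes "set r \<subseteq> {0,1,2}" "length r = k" shows "vl s r \<in> F3vecs (s + k)"
  unfolding F3vecs_def
proof (intro CollectI conjI allI impI)
  fix i
  show "vl s r i \<in> {0,1,2}"
  proof (cases "s \<le> i \<and> i - s < length r")
    case True
    then have "r ! (i - s) \<in> set r" by simp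
    then have "r ! (i - s) \<in> {0,1,2}" using assms(1) by blast
    then show ?thesis using True unfolding vl_def by simp
  qed (auto simp: vl_def)
next
  fix i assume "s + k \<le> i"
  then show "vl s r i = 0" using assms(2) by (simp add: vl_zero_hi)
qed

lemma vl_lead: assumes "llead r" shows "lead1 (vl s r)" and "\<exists>i\<ge>s. vl s r i \<noteq> 0"
proof -
  obtain j where j: "j < length r" "r ! j = 1" "\<forall>i<j. r ! i = 0" using llead_ex[OF assms] by blast
  have a: "vl s r (s + j) = 1" using j unfolding vl_def by simp
  have b: "\<forall>i<s + j. vl s r i = 0"
  proof (intro allI impI)
    fix i assume "i < s + j"
    then show "vl s r i = 0" using j unfolding vl_def by auto
  qed
  show "lead1 (vl s r)" unfolding lead1_def using a b by blast
  show "\<exists>i\<ge>s. vl s r i \<noteq> 0" using a by (intro exI[of _ "s + j"]) simp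
qed

lemma vl_inj: "inj_on (vl s) {r. length r = k}"
proof
  fix r r' assume r: "r \<in> {r. length r = k}" and r': "r' \<in> {r. length r = k}" and e: "vl s r = vl s r'"
  show "r = r'"
  proof (rule nth_equalityI)
    show "length r = length r'" using r r' by simp
    fix i assume "i < length r"
    then have "vl s r (s + i) = r ! i" "vl s r' (s + i) = r' ! i" using r r' unfolding vl_def by auto
    then show "r ! i = r' ! i" using e by simp
  qed
qed

lemma good_blk:
  assumes c: "check_rows k rows"
  shows "good (s + k) (blk s rows)" "card (blk s rows) = length rows"
    "\<forall>y\<in>blk s rows. \<exists>i\<ge>s. y i \<noteq> 0" "\<forall>y\<in>blk s rows. \<forall>i\<ge>s + k. y i = 0"
proof -
  have rows: "\<And>r. r \<in> set rows \<Longrightarrow> length r = k \<and> set r \<subseteq> {0,1,2} \<and> llead r"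
    using c unfolding check_rows_def by blast
  have dist: "distinct rows" using c unfolding check_rows_def by blast
  have gr: "gram_ok k rows" using c unfolding check_rows_def by blast
  have "set rows \<subseteq> {r. length r = k}" using rows by auto
  then have inj: "inj_on (vl s) (set rows)" by (rule inj_on_subset[OF vl_inj])
  show "card (blk s rows) = length rows"
    unfolding blk_def using card_image[OF inj] distinct_card[OF dist] by simp
  show "\<forall>y\<in>blk s rows. \<exists>i\<ge>s. y i \<noteq> 0" unfolding blk_def using rows vl_lead(2) by blast
  show "\<forall>y\<in>blk s rows. \<forall>i\<ge>s + k. y i = 0" unfolding blk_def using rows vl_zero_hi by fastforce
  have gram: "(3::int) dvd (\<Sum>x\<in>blk s rows. x j * x l)" for j l
  proof -
    have "(\<Sum>x\<in>blk s rows. x j * x l) = (\<Sum>r\<in>set rows. vl s r j * vl s r l)"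
      unfolding blk_def by (rule sum.reindex[OF inj, unfolded comp_def])
    also have "\<dots> = sum_list (map (\<lambda>r. vl s r j * vl s r l) rows)"
      by (rule sum.distinct_set_conv_list[OF dist])
    finally have eq: "(\<Sum>x\<in>blk s rows. x j * x l) = sum_list (map (\<lambda>r. vl s r j * vl s r l) rows)" .
    show ?thesis
    proof (cases "s \<le> j \<and> j - s < k \<and> s \<le> l \<and> l - s < k")
      case True
      have me: "map (\<lambda>r. vl s r j * vl s r l) rows = map (\<lambda>r. r ! (j - s) * r ! (l - s)) rows"
        using True rows unfolding vl_def by (intro map_cong) auto
      have hm: "sum_list (map (\<lambda>r. r ! (j - s) * r ! (l - s)) rows) mod 3 = 0"
        using gr True unfolding gram_ok_def by auto
      show ?thesis using hm by (simp only: eq me dvd_eq_mod_eq_0)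
    next
      case False
      have me0: "map (\<lambda>r. vl s r j * vl s r l) rows = map (\<lambda>r. 0) rows"
        using False rows unfolding vl_def by (intro map_cong) auto
      have z: "sum_list (map (\<lambda>r. 0::int) rows) = 0" by (induction rows) auto
      show ?thesis by (simp only: eq me0 z dvd_0_right)
    qed
  qed
  show "good (s + k) (blk s rows)"
    unfolding good_def
  proof (intro conjI)
    show "finite (blk s rows)" unfolding blk_def by simp
    show "blk s rows \<subseteq> F3vecs (s + k)" unfolding blk_def using rows vl_in by blast
    show "\<forall>x\<in>blk s rows. lead1 x" unfolding blk_def using rows vl_lead(1) by blast
    show "\<forall>j l. 3 dvd (\<Sum>x\<in>blk s rows. x j * x l)" using gram by blast
  qed
qed

lemma good_Un:
  assumes A: "good v A" and B: "good v B" and d: "A \<inter> B = {}"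
  shows "good v (A \<union> B)"
proof -
  have fA: "finite A" and fB: "finite B" using A B unfolding good_def by blast+
  have "(3::int) dvd (\<Sum>x\<in>A \<union> B. x j * x l)" for j l
  proof -
    have "(\<Sum>x\<in>A \<union> B. x j * x l) = (\<Sum>x\<in>A. x j * x l) + (\<Sum>x\<in>B. x j * x l)"
      by (rule sum.union_disjoint[OF fA fB d])
    moreover have "(3::int) dvd (\<Sum>x\<in>A. x j * x l)" using A unfolding good_def by blast
    moreover have "(3::int) dvd (\<Sum>x\<in>B. x j * x l)" using B unfolding good_def by blast
    ultimately show ?thesis by simp
  qed
  moreover have "finite (A \<union> B)" using fA fB by simp
  moreover have "A \<union> B \<subseteq> F3vecs v" using A B unfolding good_def by blast
  moreover have "\<forall>x\<in>A \<union> B. lead1 x" using A B unfolding good_def by blast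
  ultimately show ?thesis unfolding good_def by blast
qed

lemma F3vecs_mono: "v \<le> v' \<Longrightarrow> F3vecs v \<subseteq> F3vecs v'"
  unfolding F3vecs_def by auto

lemma good_mono: "good v A \<Longrightarrow> v \<le> v' \<Longrightarrow> good v' A"
  unfolding good_def using F3vecs_mono by blast

definition LL :: "nat \<Rightarrow> (nat \<Rightarrow> int) set" where
  "LL k = (\<Union>i<k. blk (2 * i) line_rows)"

lemma LL_props: "good (2 * k) (LL k) \<and> card (LL k) = 4 * k \<and> (\<forall>x\<in>LL k. \<forall>i\<ge>2 * k. x i = 0)"
proof (induction k)
  case 0 then show ?case by (simp add: LL_def good_def)
next
  case (Suc k)
  have eq: "LL (Suc k) = LL k \<union> blk (2 * k) line_rows" unfolding LL_def by (simp add: lessThan_Suc Un_commute)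
  note b = good_blk[OF chk_line, of "2 * k"]
  have disj: "LL k \<inter> blk (2 * k) line_rows = {}"
    using Suc.IH b(3) by fastforce
  have g1: "good (2 * Suc k) (LL k)" using Suc.IH good_mono by fastforce
  have g2: "good (2 * Suc k) (blk (2 * k) line_rows)" using b(1) by simp
  have G: "good (2 * Suc k) (LL (Suc k))" unfolding eq by (rule good_Un[OF g1 g2 disj])
  have fin1: "finite (LL k)" using Suc.IH unfolding good_def by blast
  have fin2: "finite (blk (2 * k) line_rows)" unfolding blk_def by simp
  have cu: "card (LL (Suc k)) = card (LL k) + card (blk (2 * k) line_rows)"
    unfolding eq by (rule card_Un_disjoint[OF fin1 fin2 disj])
  have C: "card (LL (Suc k)) = 4 * Suc k"
    using Suc.IH b(2) len_rows cu by simp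
  have Z: "\<forall>x\<in>LL (Suc k). \<forall>i\<ge>2 * Suc k. x i = 0"
    unfolding eq using Suc.IH b(4) by fastforce
  show ?case using G C Z by blast
qed

lemma combine:
  assumes c: "check_rows w rows"
  shows "good (2 * q + w) (LL q \<union> blk (2 * q) rows) \<and> card (LL q \<union> blk (2 * q) rows) = 4 * q + length rows"
proof -
  note b = good_blk[OF c, of "2 * q"]
  have disj: "LL q \<inter> blk (2 * q) rows = {}" using LL_props[of q] b(3) by fastforce
  have g1: "good (2 * q + w) (LL q)" using LL_props[of q] good_mono by fastforce
  have G: "good (2 * q + w) (LL q \<union> blk (2 * q) rows)" by (rule good_Un[OF g1 b(1) disj])
  have fin1: "finite (LL q)" using LL_props[of q] unfolding good_def by blast
  have fin2: "finite (blk (2 * q) rows)" unfolding blk_def by simp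
  have cu: "card (LL q \<union> blk (2 * q) rows) = card (LL q) + card (blk (2 * q) rows)"
    by (rule card_Un_disjoint[OF fin1 fin2 disj])
  have "card (LL q \<union> blk (2 * q) rows) = 4 * q + length rows"
    using LL_props[of q] b(2) cu by simp
  then show ?thesis using G by blast
qed

lemma sq_mod3: "(if (t::int) mod 3 = 0 then 0 else 1) mod 3 = (t * t) mod 3"
proof -
  have e: "(t * t) mod 3 = ((t mod 3) * (t mod 3)) mod 3" by (rule mod_mult_eq[symmetric])
  have "t mod 3 \<in> {0,1,2}" by (rule mod3_cases)
  then show ?thesis unfolding e by auto
qed

lemma good_PG:
  assumes g: "good v R"
  shows "F3span1 ` R \<subseteq> PG_points v" "card (F3span1 ` R) = card R" "divisible_pts 3 v (F3span1 ` R)"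
proof -
  have fin: "finite R" and RV: "R \<subseteq> F3vecs v" and ld: "\<And>x. x \<in> R \<Longrightarrow> lead1 x"
    and gr: "\<And>j l. (3::int) dvd (\<Sum>x\<in>R. x j * x l)" using g unfolding good_def by blast+
  have nz: "x \<noteq> (\<lambda>_. 0)" if "x \<in> R" for x
  proof
    assume "x = (\<lambda>_. 0)"
    then show False using ld[OF that] unfolding lead1_def by simp
  qed
  show "F3span1 ` R \<subseteq> PG_points v" unfolding PG_points_def using RV nz by blast
  have inj: "inj_on F3span1 R"
  proof (rule inj_onI)
    fix x y assume x: "x \<in> R" and y: "y \<in> R" and e: "F3span1 x = F3span1 y"
    have xV: "x \<in> F3vecs v" and yV: "y \<in> F3vecs v" using x y RV by auto
    have "y \<in> F3span1 x" using span_mem[OF yV] e by simp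
    then obtain c where c: "c \<in> {0,1,2}" "y = F3smult c x" unfolding F3span1_def by auto
    have yi: "y i = (c * x i) mod 3" for i using c(2) unfolding F3smult_def by simp
    have xi: "x i \<in> {0,1,2}" for i using xV unfolding F3vecs_def by auto
    obtain j where j: "x j = 1" "\<forall>i<j. x i = 0" using ld[OF x] unfolding lead1_def by blast
    obtain j' where j': "y j' = 1" "\<forall>i<j'. y i = 0" using ld[OF y] unfolding lead1_def by blast
    consider "c = 0" | "c = 1" | "c = 2" using c(1) by auto
    then show "x = y"
    proof cases
      case 1
      then show ?thesis using j'(1) yi[of j'] by simp
    next
      case 2
      show ?thesis
      proof
        fix i show "x i = y i" using yi[of i] xi[of i] 2 by auto
      qed
    next
      case 3
      have yj: "y j = 2" using yi[of j] j(1) 3 by simp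
      have ylow: "y i = 0" if "i < j" for i using yi[of i] j(2) that by simp
      show ?thesis
      proof (cases j' j rule: linorder_cases)
        case less then show ?thesis using ylow[of j'] j'(1) by simp
      next
        case equal then show ?thesis using yj j'(1) by simp
      next
        case greater then show ?thesis using j'(2) yj by simp
      qed
    qed
  qed
  show "card (F3span1 ` R) = card R" by (rule card_image[OF inj])
  show "divisible_pts 3 v (F3span1 ` R)"
    unfolding divisible_pts_def
  proof (intro exI[of _ "int (card R)"] ballI)
    fix H assume "H \<in> PG_hyperplanes v"
    then obtain a where a: "a \<in> F3vecs v" "H = {x \<in> F3vecs v. (\<Sum>i<v. a i * x i) mod 3 = 0}"
      unfolding PG_hyperplanes_def by blast
    have H: "H = Hs v a" unfolding a(2) Hs_def dot_def by simp
    define R0 where "R0 = {x \<in> R. dot v a x mod 3 = 0}"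
    define R1 where "R1 = {x \<in> R. dot v a x mod 3 \<noteq> 0}"
    have sub: "F3span1 x \<subseteq> H \<longleftrightarrow> dot v a x mod 3 = 0" if "x \<in> R" for x
    proof -
      have "x \<in> F3vecs v" using that RV by blast
      then show ?thesis unfolding H by (rule span_sub_H)
    qed
    have "{P \<in> F3span1 ` R. P \<subseteq> H} = F3span1 ` R0"
    proof (intro equalityI subsetI)
      fix P assume "P \<in> {P \<in> F3span1 ` R. P \<subseteq> H}"
      then obtain x where x: "x \<in> R" "P = F3span1 x" "F3span1 x \<subseteq> H" by blast
      then have "x \<in> R0" unfolding R0_def using sub[OF x(1)] by simp
      then show "P \<in> F3span1 ` R0" using x(2) by blast
    next
      fix P assume "P \<in> F3span1 ` R0"
      then obtain x where x: "x \<in> R0" "P = F3span1 x" by blast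
      then have xR: "x \<in> R" and xd: "dot v a x mod 3 = 0" unfolding R0_def by auto
      then have "F3span1 x \<subseteq> H" using sub[OF xR] by simp
      then show "P \<in> {P \<in> F3span1 ` R. P \<subseteq> H}" using x(2) \<open>x \<in> R\<close> by blast
    qed
    moreover have R0R: "R0 \<subseteq> R" unfolding R0_def by auto
    ultimately have c0: "card {P \<in> F3span1 ` R. P \<subseteq> H} = card R0"
      using card_image[OF inj_on_subset[OF inj R0R]] by simp
    have RU: "R = R0 \<union> R1" and RD: "R0 \<inter> R1 = {}" unfolding R0_def R1_def by auto
    have f0: "finite R0" and f1: "finite R1" using fin unfolding R0_def R1_def by auto
    have cR: "card R = card R0 + card R1" using card_Un_disjoint[OF f0 f1 RD] RU by simp
    have "int (card R1) = (\<Sum>x\<in>R. of_bool (dot v a x mod 3 \<noteq> 0))"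
      using fin unfolding R1_def by (simp add: Int_def conj_commute)
    also have "\<dots> = (\<Sum>x\<in>R. (if dot v a x mod 3 = 0 then 0 else 1))"
      by (rule sum.cong) auto
    finally have "int (card R1) mod 3 = (\<Sum>x\<in>R. (if dot v a x mod 3 = 0 then 0 else 1) mod 3) mod 3"
      by (simp add: mod_sum_eq)
    also have "\<dots> = (\<Sum>x\<in>R. (dot v a x * dot v a x) mod 3) mod 3"
      by (simp only: sq_mod3)
    also have "\<dots> = (\<Sum>x\<in>R. dot v a x * dot v a x) mod 3" by (rule mod_sum_eq)
    finally have m1: "int (card R1) mod 3 = (\<Sum>x\<in>R. dot v a x * dot v a x) mod 3" .
    have "(\<Sum>x\<in>R. dot v a x * dot v a x) = (\<Sum>x\<in>R. \<Sum>j<v. \<Sum>l<v. (a j * x j) * (a l * x l))"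
      unfolding dot_def by (simp add: sum_product)
    also have "\<dots> = (\<Sum>j<v. \<Sum>x\<in>R. \<Sum>l<v. (a j * x j) * (a l * x l))" by (rule sum.swap)
    also have "\<dots> = (\<Sum>j<v. \<Sum>l<v. \<Sum>x\<in>R. (a j * x j) * (a l * x l))"
      by (rule sum.cong[OF refl]) (rule sum.swap)
    also have "\<dots> = (\<Sum>j<v. \<Sum>l<v. (a j * a l) * (\<Sum>x\<in>R. x j * x l))"
      by (simp add: sum_distrib_left algebra_simps)
    finally have "(3::int) dvd (\<Sum>x\<in>R. dot v a x * dot v a x)"
      using gr by (simp add: dvd_sum)
    then have "int (card R1) mod 3 = 0" using m1 by simp
    then show "int (card {P \<in> F3span1 ` R. P \<subseteq> H}) mod int 3 = int (card R) mod int 3"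
      unfolding c0 cR by (simp add: mod_add_right_eq[symmetric])
  qed
qed

lemma exist_one:
  assumes c: "check_rows w rows" and w: "w \<ge> 2" and ne: "length rows > 0"
  shows "\<exists>v C. v \<ge> 2 \<and> C \<subseteq> PG_points v \<and> C \<noteq> {} \<and> divisible_pts 3 v C \<and> card C = 4 * q + length rows"
proof -
  define R where "R = LL q \<union> blk (2 * q) rows"
  have g: "good (2 * q + w) R" and cr: "card R = 4 * q + length rows"
    using combine[OF c, of q] unfolding R_def by auto
  note p = good_PG[OF g]
  have "F3span1 ` R \<noteq> {}" using p(2) cr ne by auto
  then show ?thesis using p cr w by (intro exI[of _ "2 * q + w"] exI[of _ "F3span1 ` R"]) auto
qed

theorem lemma6p7:
  shows "(\<forall>v C. v \<ge> 2 \<longrightarrow> C \<subseteq> PG_points v \<longrightarrow> C \<noteq> {} \<longrightarrow> divisible_pts 3 v C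
            \<longrightarrow> card C = 4 \<or> card C \<ge> 8)
       \<and> (\<forall>n::nat. (n = 4 \<or> n \<ge> 8) \<longrightarrow>
            (\<exists>v C. v \<ge> 2 \<and> C \<subseteq> PG_points v \<and> C \<noteq> {} \<and> divisible_pts 3 v C \<and> card C = n))"
proof (intro conjI allI impI)
  fix v C assume "v \<ge> 2" "C \<subseteq> PG_points v" "C \<noteq> {}" "divisible_pts 3 v C"
  then show "card C = 4 \<or> card C \<ge> 8" using nonexist by blast
next
  fix n :: nat assume n: "n = 4 \<or> n \<ge> 8"
  have L: "\<exists>v C. v \<ge> 2 \<and> C \<subseteq> PG_points v \<and> C \<noteq> {} \<and> divisible_pts 3 v C \<and> card C = 4 * q + 4" for q
    using exist_one[OF chk_line, of q] len_rows by simp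
  have A: "\<exists>v C. v \<ge> 2 \<and> C \<subseteq> PG_points v \<and> C \<noteq> {} \<and> divisible_pts 3 v C \<and> card C = 4 * q + 9" for q
    using exist_one[OF chk_aff, of q] len_rows by simp
  have O: "\<exists>v C. v \<ge> 2 \<and> C \<subseteq> PG_points v \<and> C \<noteq> {} \<and> divisible_pts 3 v C \<and> card C = 4 * q + 10" for q
    using exist_one[OF chk_ov, of q] len_rows by simp
  have El: "\<exists>v C. v \<ge> 2 \<and> C \<subseteq> PG_points v \<and> C \<noteq> {} \<and> divisible_pts 3 v C \<and> card C = 4 * q + 11" for q
    using exist_one[OF chk_el, of q] len_rows by simp
  consider "n mod 4 = 0" | "n mod 4 = 1" | "n mod 4 = 2" | "n mod 4 = 3" by arith
  then show "\<exists>v C. v \<ge> 2 \<and> C \<subseteq> PG_points v \<and> C \<noteq> {} \<and> divisible_pts 3 v C \<and> card C = n"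
  proof cases
    case 1
    then have "n = 4 * (n div 4 - 1) + 4" using n by arith
    then show ?thesis using L[of "n div 4 - 1"] by metis
  next
    case 2
    then have "n = 4 * (n div 4 - 2) + 9" using n by arith
    then show ?thesis using A[of "n div 4 - 2"] by metis
  next
    case 3
    then have "n = 4 * (n div 4 - 2) + 10" using n by arith
    then show ?thesis using O[of "n div 4 - 2"] by metis
  next
    case 4
    then have "n = 4 * (n div 4 - 2) + 11" using n by arith
    then show ?thesis using El[of "n div 4 - 2"] by metis
  qed
qed

end
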